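(* Let $G$ be a word-representable graph and $n\ge 2$. Then $l(G \circ K_n) \le n\,l(G) + (n-1)\kappa_G$, where $\kappa_G$ is the size of a maximum clique of $G$.
   Context: All graphs are simple and undirected; $K_n$ is the complete graph on $n$ vertices, rooted at one of its vertices. Letters $x,y$ alternate in a word $w$ if deleting all other letters from $w$ yields $xyxy\ldots$ or $yxyx\ldots$ (of either parity). A word $w$ over $V(G)$ represents $G$ if every vertex occurs in $w$ and for all distinct $x,y$, $xy\in E(G)$ iff $x,y$ alternate in $w$; $G$ is word-representable if such a word exists, and $l(G)$ is the minimum length of a word representing $G$. For a graph $G$ and a rooted graph $H$, the rooted product $G\circ H$ is obtained by taking $|V(G)|$ disjoint copies of $H$, one for each vertex $v$ of $G$, and identifying each vertex $v$ of $G$ with the root of its copy of $H$. *)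

theory Defs
  imports Main
begin

definition simple_graph :: "'a set \<Rightarrow> ('a \<Rightarrow> 'a \<Rightarrow> bool) \<Rightarrow> bool" where
  "simple_graph V E \<longleftrightarrow> finite V \<and>
     (\<forall>x y. E x y \<longrightarrow> x \<in> V \<and> y \<in> V \<and> x \<noteq> y \<and> E y x)"

definition alternate :: "'a list \<Rightarrow> 'a \<Rightarrow> 'a \<Rightarrow> bool" where
  "alternate w x y \<longleftrightarrow>
     (let u = filter (\<lambda>z. z = x \<or> z = y) w in
      \<forall>i. Suc i < length u \<longrightarrow> u ! i \<noteq> u ! Suc i)"

definition represents :: "'a set \<Rightarrow> ('a \<Rightarrow> 'a \<Rightarrow> bool) \<Rightarrow> 'a list \<Rightarrow> bool" where
  "represents V E w \<longleftrightarrow> set w = V \<and>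
     (\<forall>x\<in>V. \<forall>y\<in>V. x \<noteq> y \<longrightarrow> (E x y \<longleftrightarrow> alternate w x y))"

definition word_representable :: "'a set \<Rightarrow> ('a \<Rightarrow> 'a \<Rightarrow> bool) \<Rightarrow> bool" where
  "word_representable V E \<longleftrightarrow> (\<exists>w. represents V E w)"

definition min_rep_length :: "'a set \<Rightarrow> ('a \<Rightarrow> 'a \<Rightarrow> bool) \<Rightarrow> nat" where
  "min_rep_length V E = (LEAST k. \<exists>w. represents V E w \<and> length w = k)"

definition is_clique :: "'a set \<Rightarrow> ('a \<Rightarrow> 'a \<Rightarrow> bool) \<Rightarrow> 'a set \<Rightarrow> bool" where
  "is_clique V E C \<longleftrightarrow> C \<subseteq> V \<and> (\<forall>x\<in>C. \<forall>y\<in>C. x \<noteq> y \<longrightarrow> E x y)"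

definition clique_number :: "'a set \<Rightarrow> ('a \<Rightarrow> 'a \<Rightarrow> bool) \<Rightarrow> nat" where
  "clique_number V E = Max (card ` {C. is_clique V E C})"

text \<open>Rooted product G \<circ> K_n: the copy of K_n at v has vertices (v,0),...,(v,n-1),
  with root (v,0) identified with v.\<close>
definition rp_verts :: "'a set \<Rightarrow> nat \<Rightarrow> ('a \<times> nat) set" where
  "rp_verts V n = V \<times> {0..<n}"

definition rp_edge :: "('a \<Rightarrow> 'a \<Rightarrow> bool) \<Rightarrow> ('a \<times> nat) \<Rightarrow> ('a \<times> nat) \<Rightarrow> bool" where
  "rp_edge E p q \<longleftrightarrow>
     (snd p = 0 \<and> snd q = 0 \<and> E (fst p) (fst q)) \<or> (fst p = fst q \<and> snd p \<noteq> snd q)"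

end

theory Submission imports Defs begin

definition Lst :: "'a \<Rightarrow> nat \<Rightarrow> ('a \<times> nat) list" where
  "Lst x n = map (\<lambda>i. (x,i)) [1..<n]"

definition blk :: "nat \<Rightarrow> 'a \<Rightarrow> bool \<Rightarrow> bool \<Rightarrow> ('a \<times> nat) list" where
  "blk n x f l = (if f then Lst x n @ [(x,0)] @ Lst x n else if l then [(x,0)] else (x,0) # Lst x n)"

fun tr :: "nat \<Rightarrow> 'a set \<Rightarrow> 'a list \<Rightarrow> ('a \<times> nat) list" where
  "tr n S [] = []"
| "tr n S (x#xs) = blk n x (x \<notin> S) (x \<notin> set xs) @ tr n (insert x S) xs"

lemma alternate_succ: "alternate w x y \<longleftrightarrow> successively (\<noteq>) (filter (\<lambda>z. z = x \<or> z = y) w)"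
  unfolding alternate_def Let_def successively_conv_nth by simp

lemma alternate_sym: "alternate w x y \<longleftrightarrow> alternate w y x"
  unfolding alternate_succ by (metis (mono_tags, lifting) filter_cong)

lemma filter_Lst_other: "(\<And>z. Q z \<Longrightarrow> fst z = u) \<Longrightarrow> x \<noteq> u \<Longrightarrow> filter Q (Lst x n) = []"
  unfolding Lst_def by (auto simp: filter_empty_conv)

lemma filter_blk_other: "(\<And>z. Q z \<Longrightarrow> fst z = u) \<Longrightarrow> x \<noteq> u \<Longrightarrow> filter Q (blk n x f l) = []"
  unfolding blk_def using filter_Lst_other[of Q u x n] by auto

definition RR :: "'b list \<Rightarrow> 'b list \<Rightarrow> nat \<Rightarrow> 'b list" where
  "RR P0 P m = (if m = 0 then [] else concat (replicate (m-1) (P0 @ P)) @ P0)"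

lemma filter_tr_copy:
  assumes "\<And>z. Q z \<Longrightarrow> fst z = u"
  shows "filter Q (tr n S w) =
    (if u \<in> S then RR (filter Q [(u,0)]) (filter Q (Lst u n)) (count_list w u)
     else if u \<in> set w then filter Q (Lst u n) @ filter Q [(u,0)] @ filter Q (Lst u n)
        @ RR (filter Q [(u,0)]) (filter Q (Lst u n)) (count_list w u - 1)
     else [])"
proof (induction w arbitrary: S)
  case Nil
  then show ?case by (simp add: RR_def)
next
  case (Cons x xs)
  show ?case
  proof (cases "x = u")
    case False
    then show ?thesis using Cons.IH[of "insert x S"] filter_blk_other[OF assms False] by simp
  next
    case True
    note IH = Cons.IH[of "insert x S"]
    show ?thesis
    proof (cases "u \<in> S")
      case uS: True
      show ?thesis
      proof (cases "u \<in> set xs")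
        case True
        then have "count_list xs u \<noteq> 0" by (simp add: count_list_0_iff)
        then obtain c where c: "count_list xs u = Suc c" by (cases "count_list xs u") auto
        show ?thesis using IH uS True \<open>x = u\<close> c
          by (simp add: blk_def RR_def insert_absorb)
      next
        case False
        then show ?thesis using IH uS \<open>x = u\<close> by (simp add: blk_def RR_def insert_absorb)
      qed
    next
      case False
      then show ?thesis using IH \<open>x = u\<close> by (simp add: blk_def)
    qed
  qed
qed

lemma filter_tr_root:
  "filter (\<lambda>z. z = (u,0) \<or> z = (v,0)) (tr n S w) = map (\<lambda>z. (z,0)) (filter (\<lambda>z. z = u \<or> z = v) w)"
proof (induction w arbitrary: S)
  case Nil
  then show ?case by simp
next
  case (Cons x xs)
  have "filter (\<lambda>z. z = (u,0) \<or> z = (v,0)) (Lst x n) = []"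
    unfolding Lst_def by (auto simp: filter_empty_conv)
  then show ?case using Cons.IH by (auto simp: blk_def)
qed

lemma tr_split:
  assumes "u \<notin> set xs" "u \<notin> S"
  shows "\<exists>A B. tr n S (xs @ u # ys) = A @ Lst u n @ [(u,0)] @ Lst u n @ B"
  using assms
proof (induction xs arbitrary: S)
  case Nil
  then show ?case by (auto simp: blk_def)
next
  case (Cons x xs)
  have "u \<notin> insert x S" "u \<notin> set xs" using Cons.prems by auto
  then obtain A B where "tr n (insert x S) (xs @ u # ys) = A @ Lst u n @ [(u,0)] @ Lst u n @ B"
    using Cons.IH by blast
  then have "tr n S ((x # xs) @ u # ys) = (blk n x (x \<notin> S) (x \<notin> set (xs @ u # ys)) @ A) @ Lst u n @ [(u,0)] @ Lst u n @ B"
    by simp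
  then show ?case by blast
qed

lemma set_tr_sub: "n \<ge> 1 \<Longrightarrow> set (tr n S w) \<subseteq> set w \<times> {0..<n}"
  by (induction w arbitrary: S) (auto simp: blk_def Lst_def)

lemma set_tr_sup:
  assumes "u \<in> set w" "i < n"
  shows "(u,i) \<in> set (tr n {} w)"
proof -
  obtain xs ys where "w = xs @ u # ys" "u \<notin> set xs" using split_list_first[OF assms(1)] by blast
  then obtain A B where "tr n {} w = A @ Lst u n @ [(u,0)] @ Lst u n @ B"
    using tr_split[of u xs "{}" n ys] by auto
  then show ?thesis using assms(2) by (cases i) (auto simp: Lst_def)
qed

lemma filter_Lst_single:
  assumes "1 \<le> i" "i < n" "\<And>j. 1 \<le> j \<Longrightarrow> j < n \<Longrightarrow> Q (u,j) \<longleftrightarrow> j = i"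
  shows "filter Q (Lst u n) = [(u,i)]"
proof -
  have a: "[1..<n] = [1..<i] @ [i..<n]" using upt_add_eq_append[of 1 i "n-i"] assms by simp
  have b: "[i..<n] = i # [Suc i..<n]" using assms upt_conv_Cons by blast
  have "[1..<n] = [1..<i] @ [i] @ [Suc i..<n]" using a b by simp
  then show ?thesis unfolding Lst_def using assms
    by (auto simp: filter_empty_conv)
qed

lemma filter_Lst_two:
  assumes "1 \<le> i" "i < j" "j < n" "\<And>k. 1 \<le> k \<Longrightarrow> k < n \<Longrightarrow> Q (u,k) \<longleftrightarrow> k = i \<or> k = j"
  shows "filter Q (Lst u n) = [(u,i),(u,j)]"
proof -
  have a: "[1..<n] = [1..<i] @ [i..<n]" using upt_add_eq_append[of 1 i "n-i"] assms by simp
  have b: "[i..<n] = i # [Suc i..<n]" using assms upt_conv_Cons by simp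
  have c: "[Suc i..<n] = [Suc i..<j] @ [j..<n]" using upt_add_eq_append[of "Suc i" j "n-j"] assms by simp
  have d: "[j..<n] = j # [Suc j..<n]" using assms upt_conv_Cons by simp
  have "[1..<n] = [1..<i] @ [i] @ [Suc i..<j] @ [j] @ [Suc j..<n]" using a b c d by simp
  then show ?thesis unfolding Lst_def using assms
    by (auto simp: filter_empty_conv)
qed

lemma len_Lst: "length (Lst x n) = n - 1"
  by (simp add: Lst_def)

lemma len_tr:
  assumes "n \<ge> 1"
  shows "length (tr n S w) + (n-1) * card (set w \<inter> S) =
         n * length w + (n-1) * card {x\<in>set w. x \<notin> S \<and> count_list w x = 1}"
proof (induction w arbitrary: S)
  case Nil
  then show ?case by simp
next
  case (Cons x xs)
  note IH = Cons.IH[of "insert x S"]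
  obtain m where n: "n = Suc m" using assms by (cases n) auto
  show ?case
  proof (cases "x \<in> S")
    case xS: False
    show ?thesis
    proof (cases "x \<in> set xs")
      case False
      have e1: "set (x#xs) \<inter> S = set xs \<inter> insert x S" using xS False by auto
      have e2: "{y\<in>set (x#xs). y \<notin> S \<and> count_list (x#xs) y = 1}
          = insert x {y\<in>set xs. y \<notin> insert x S \<and> count_list xs y = 1}"
        using xS False by auto
      have c2: "card (insert x {y\<in>set xs. y \<notin> insert x S \<and> count_list xs y = 1})
          = Suc (card {y\<in>set xs. y \<notin> insert x S \<and> count_list xs y = 1})"
        by (rule card_insert_disjoint) auto
      show ?thesis using IH xS False unfolding e1 e2 c2
        by (simp add: blk_def len_Lst n algebra_simps)
    next
      case True
      have e1: "set (x#xs) \<inter> S = set xs \<inter> S" using xS by auto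
      have e1': "set xs \<inter> insert x S = insert x (set xs \<inter> S)" using True by auto
      have c1: "card (insert x (set xs \<inter> S)) = Suc (card (set xs \<inter> S))"
        by (rule card_insert_disjoint) (use xS in auto)
      have e2: "{y\<in>set (x#xs). y \<notin> S \<and> count_list (x#xs) y = 1}
          = {y\<in>set xs. y \<notin> insert x S \<and> count_list xs y = 1}"
        using xS True by (auto simp: count_list_0_iff)
      show ?thesis using IH xS True unfolding e1 e1' e2 c1
        by (simp add: blk_def len_Lst n algebra_simps)
    qed
  next
    case xS: True
    have iS: "insert x S = S" using xS by auto
    show ?thesis
    proof (cases "x \<in> set xs")
      case False
      have e1: "set (x#xs) \<inter> S = insert x (set xs \<inter> S)" using xS by auto
      have c1: "card (insert x (set xs \<inter> S)) = Suc (card (set xs \<inter> S))"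
        by (rule card_insert_disjoint) (use False in auto)
      have e2: "{y\<in>set (x#xs). y \<notin> S \<and> count_list (x#xs) y = 1}
          = {y\<in>set xs. y \<notin> S \<and> count_list xs y = 1}"
        using xS by auto
      show ?thesis using Cons.IH[of S] xS False unfolding e1 e2 c1 iS
        by (simp add: blk_def len_Lst n algebra_simps iS)
    next
      case True
      have e1: "set (x#xs) \<inter> S = set xs \<inter> S" using True by auto
      have e2: "{y\<in>set (x#xs). y \<notin> S \<and> count_list (x#xs) y = 1}
          = {y\<in>set xs. y \<notin> S \<and> count_list xs y = 1}"
        using xS by auto
      show ?thesis using Cons.IH[of S] xS True unfolding e1 e2 iS
        by (simp add: blk_def len_Lst n algebra_simps iS)
    qed
  qed
qed

lemma succ_rep: "a \<noteq> b \<Longrightarrow> successively (\<noteq>) (concat (replicate m [a,b]) @ [a])"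
proof (induction m)
  case 0
  then show ?case by simp
next
  case (Suc m)
  have h: "hd (concat (replicate m [a,b]) @ [a]) = a" by (cases m) auto
  show ?case using Suc h by (simp add: successively_Cons)
qed

lemma succ_rep2: "c \<noteq> d \<Longrightarrow> successively (\<noteq>) (concat (replicate m [c,d]))"
proof (induction m)
  case 0
  then show ?case by simp
next
  case (Suc m)
  have h: "m > 0 \<Longrightarrow> hd (concat (replicate m [c,d])) = c" by (cases m) auto
  show ?case using Suc h by (cases m) (simp_all add: successively_Cons)
qed

lemma alt_copy0:
  assumes "u \<in> set w" "1 \<le> j" "j < n"
  shows "alternate (tr n {} w) (u,0) (u,j)"
proof -
  define Q where "Q = (\<lambda>z. z = (u,0) \<or> z = (u,j))"
  have hQ: "\<And>z. Q z \<Longrightarrow> fst z = u" unfolding Q_def by auto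
  have L: "filter Q (Lst u n) = [(u,j)]"
    by (rule filter_Lst_single) (use assms in \<open>auto simp: Q_def\<close>)
  have L0: "filter Q [(u,0)] = [(u,0)]" by (simp add: Q_def)
  have F: "filter Q (tr n {} w) = [(u,j),(u,0),(u,j)] @ RR [(u,0)] [(u,j)] (count_list w u - 1)"
    using filter_tr_copy[where Q=Q and u=u and n=n and S="{}" and w=w, OF hQ] assms(1) L L0 by simp
  have "successively (\<noteq>) ([(u,j),(u,0),(u,j)] @ RR [(u,0)] [(u,j)] (count_list w u - 1))"
  proof (cases "count_list w u - 1")
    case 0
    then show ?thesis using assms by (simp add: RR_def)
  next
    case (Suc c)
    have s: "successively (\<noteq>) (concat (replicate (Suc c) [(u,0),(u,j)]) @ [(u,0)])"
      by (rule succ_rep) (use assms in auto)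
    have e: "[(u,j),(u,0),(u,j)] @ RR [(u,0)] [(u,j)] (count_list w u - 1)
       = (u,j) # (concat (replicate (Suc c) [(u,0),(u,j)]) @ [(u,0)])"
      using Suc by (simp add: RR_def)
    show ?thesis unfolding e using s assms by (simp add: successively_Cons)
  qed
  then show ?thesis unfolding alternate_succ F[unfolded Q_def] .
qed

lemma alt_copy12:
  assumes "u \<in> set w" "1 \<le> i" "i < j" "j < n"
  shows "alternate (tr n {} w) (u,i) (u,j)"
proof -
  define Q where "Q = (\<lambda>z. z = (u,i) \<or> z = (u,j))"
  have hQ: "\<And>z. Q z \<Longrightarrow> fst z = u" unfolding Q_def by auto
  have L: "filter Q (Lst u n) = [(u,i),(u,j)]"
    by (rule filter_Lst_two) (use assms in \<open>auto simp: Q_def\<close>)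
  have L0: "filter Q [(u,0)] = []" using assms by (simp add: Q_def)
  have F: "filter Q (tr n {} w) = [(u,i),(u,j)] @ [(u,i),(u,j)] @ RR [] [(u,i),(u,j)] (count_list w u - 1)"
    using filter_tr_copy[where Q=Q and u=u and n=n and S="{}" and w=w, OF hQ] assms(1) L L0 by simp
  have e: "[(u,i),(u,j)] @ [(u,i),(u,j)] @ RR [] [(u,i),(u,j)] (count_list w u - 1)
      = concat (replicate (if count_list w u - 1 = 0 then 2 else count_list w u) [(u,i),(u,j)])"
  proof (cases "count_list w u - 1 = 0")
    case True
    then show ?thesis by (simp add: RR_def numeral_2_eq_2)
  next
    case False
    have "\<exists>c. count_list w u = Suc (Suc c)" using False by presburger
    then obtain c where c: "count_list w u = Suc (Suc c)" by blast
    then show ?thesis by (simp add: RR_def)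
  qed
  have "successively (\<noteq>) ([(u,i),(u,j)] @ [(u,i),(u,j)] @ RR [] [(u,i),(u,j)] (count_list w u - 1))"
    unfolding e by (rule succ_rep2) (use assms in auto)
  then show ?thesis unfolding alternate_succ F[unfolded Q_def] .
qed

lemma alt_cross:
  assumes "u \<in> set w" "1 \<le> i" "i < n" "fst y \<noteq> u"
  shows "\<not> alternate (tr n {} w) (u,i) y"
proof -
  obtain xs ys where w: "w = xs @ u # ys" "u \<notin> set xs" using split_list_first[OF assms(1)] by blast
  then obtain A B where T: "tr n {} w = A @ Lst u n @ [(u,0)] @ Lst u n @ B"
    using tr_split[of u xs "{}" n ys] by auto
  define Q where "Q = (\<lambda>z. z = (u,i) \<or> z = y)"
  have L: "filter Q (Lst u n) = [(u,i)]"
    by (rule filter_Lst_single) (use assms in \<open>auto simp: Q_def\<close>)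
  have L0: "\<not> Q (u,0)" using assms by (auto simp: Q_def)
  have "\<not> successively (\<noteq>) (filter Q (tr n {} w))"
    unfolding T using L L0 by (simp add: successively_append_iff)
  then show ?thesis unfolding alternate_succ Q_def .
qed

lemma alt_root: "alternate (tr n S w) (u,0) (v,0) \<longleftrightarrow> alternate w u v"
  unfolding alternate_succ filter_tr_root successively_map by simp

lemma count_filter: "P z \<Longrightarrow> count_list (filter P w) z = count_list w z"
  by (induction w) auto

lemma count_adj:
  assumes "Suc i < length u" "u ! i = u ! Suc i"
  shows "count_list u (u ! i) \<ge> 2"
proof -
  have "u = take i u @ drop i u" by simp
  also have "drop i u = u ! i # u ! Suc i # drop (Suc (Suc i)) u"
    using assms(1) by (metis Cons_nth_drop_Suc Suc_lessD)
  finally have "u = take i u @ u ! i # u ! Suc i # drop (Suc (Suc i)) u" .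
  then have "count_list u (u ! i) = count_list (take i u @ u ! i # u ! Suc i # drop (Suc (Suc i)) u) (u ! i)"
    by simp
  then show ?thesis using assms(2) by simp
qed

lemma singles_clique:
  assumes "represents V E w"
  shows "is_clique V E {x\<in>set w. count_list w x = 1}"
  unfolding is_clique_def
proof (intro conjI ballI impI)
  show "{x \<in> set w. count_list w x = 1} \<subseteq> V" using assms by (auto simp: represents_def)
next
  fix x y assume x: "x \<in> {x \<in> set w. count_list w x = 1}" and y: "y \<in> {x \<in> set w. count_list w x = 1}"
    and xy: "x \<noteq> y"
  define u where "u = filter (\<lambda>z. z = x \<or> z = y) w"
  have "alternate w x y"
    unfolding alternate_def Let_def u_def[symmetric]
  proof (intro allI impI notI)
    fix i assume i: "Suc i < length u" "u ! i = u ! Suc i"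
    have "u ! i \<in> set u" using i by simp
    then have z: "u ! i = x \<or> u ! i = y" unfolding u_def by auto
    have "count_list u (u ! i) \<ge> 2" by (rule count_adj[OF i])
    moreover have "count_list u (u ! i) = count_list w (u ! i)"
      using count_filter[of "\<lambda>z. z = x \<or> z = y" "u ! i" w] z u_def by simp
    moreover have cx: "count_list w x = 1" using x by simp
    moreover have cy: "count_list w y = 1" using y by simp
    moreover have "count_list w (u ! i) = 1" using z cx cy by (elim disjE) simp_all
    ultimately show False by simp
  qed
  then show "E x y" using assms x y xy by (auto simp: represents_def)
qed


theorem mainTheorem10:
  fixes V :: "'a set" and E :: "'a \<Rightarrow> 'a \<Rightarrow> bool" and n :: nat
  assumes "simple_graph V E" and "word_representable V E" and "n \<ge> 2"
  shows "word_representable (rp_verts V n) (rp_edge E) \<and>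
         min_rep_length (rp_verts V n) (rp_edge E)
           \<le> n * min_rep_length V E + (n - 1) * clique_number V E"
proof -
  have finV: "finite V" using assms(1) by (simp add: simple_graph_def)
  obtain w0 where "represents V E w0" using assms(2) by (auto simp: word_representable_def)
  then have ex: "\<exists>k. \<exists>w. represents V E w \<and> length w = k" by blast
  obtain w where w: "represents V E w" "length w = min_rep_length V E"
    using LeastI_ex[OF ex] unfolding min_rep_length_def by blast
  have sw: "set w = V" using w(1) by (simp add: represents_def)
  define W where "W = tr n {} w"
  have n1: "n \<ge> 1" using assms(3) by simp
  have setW: "set W = rp_verts V n"
  proof
    show "set W \<subseteq> rp_verts V n" using set_tr_sub[OF n1, of "{}" w] sw by (simp add: W_def rp_verts_def)
  next
    show "rp_verts V n \<subseteq> set W"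
      using set_tr_sup[of _ w _ n] sw by (auto simp: W_def rp_verts_def)
  qed
  have edges: "rp_edge E p q \<longleftrightarrow> alternate W p q"
    if p: "p \<in> rp_verts V n" and q: "q \<in> rp_verts V n" and pq: "p \<noteq> q" for p q
  proof -
    obtain u i where pd: "p = (u,i)" by (cases p)
    obtain v j where qd: "q = (v,j)" by (cases q)
    have u: "u \<in> set w" "i < n" using p pd sw by (auto simp: rp_verts_def)
    have v: "v \<in> set w" "j < n" using q qd sw by (auto simp: rp_verts_def)
    show ?thesis
    proof (cases "u = v")
      case True
      then have ij: "i \<noteq> j" using pq pd qd by auto
      have "alternate W (u,i) (u,j)"
      proof (cases "i = 0")
        case True
        then show ?thesis using alt_copy0[of u w j n] u v ij by (simp add: W_def)
      next
        case i0: False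
        show ?thesis
        proof (cases "j = 0")
          case True
          then show ?thesis using alt_copy0[of u w i n] u ij i0 alternate_sym[of "tr n {} w" "(u,i)" "(u,0)"] by (simp add: W_def)
        next
          case False
          show ?thesis
          proof (cases "i < j")
            case True
            then show ?thesis using alt_copy12[of u w i j n] u v i0 by (simp add: W_def)
          next
            case False
            then have "j < i" using ij by simp
            then show ?thesis using alt_copy12[of u w j i n] u v \<open>j \<noteq> 0\<close> alternate_sym[of "tr n {} w" "(u,i)" "(u,j)"]
              by (simp add: W_def)
          qed
        qed
      qed
      then show ?thesis using pd qd True ij by (simp add: rp_edge_def)
    next
      case False
      show ?thesis
      proof (cases "i = 0 \<and> j = 0")
        case True
        have "E u v \<longleftrightarrow> alternate w u v" using w(1) u v False sw by (auto simp: represents_def)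
        then show ?thesis using True pd qd False alt_root[of n "{}" w u v] by (simp add: rp_edge_def W_def)
      next
        case ij: False
        have "\<not> alternate W (u,i) (v,j)"
        proof (cases "i = 0")
          case True
          then have "j \<noteq> 0" using ij by simp
          then have "\<not> alternate W (v,j) (u,i)" using alt_cross[of v w j n "(u,i)"] v False by (simp add: W_def)
          then show ?thesis using alternate_sym by metis
        next
          case False
          then show ?thesis using alt_cross[of u w i n "(v,j)"] u \<open>u \<noteq> v\<close> by (simp add: W_def)
        qed
        then show ?thesis using pd qd ij \<open>u \<noteq> v\<close> by (auto simp: rp_edge_def)
      qed
    qed
  qed
  have repW: "represents (rp_verts V n) (rp_edge E) W"
    unfolding represents_def using setW edges by blast
  define F where "F = {x\<in>set w. count_list w x = 1}"
  have lenW: "length W = n * length w + (n-1) * card F"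
    using len_tr[OF n1, of "{}" w] by (simp add: W_def F_def)
  have cl: "is_clique V E F" unfolding F_def by (rule singles_clique[OF w(1)])
  have fin: "finite {C. is_clique V E C}"
    by (rule finite_subset[of _ "Pow V"]) (use finV in \<open>auto simp: is_clique_def\<close>)
  have "card F \<le> clique_number V E"
    unfolding clique_number_def by (rule Max_ge) (use fin cl in auto)
  then have lenW2: "length W \<le> n * min_rep_length V E + (n - 1) * clique_number V E"
    using lenW w(2) by simp
  have "min_rep_length (rp_verts V n) (rp_edge E) \<le> length W"
    unfolding min_rep_length_def by (rule Least_le) (use repW in blast)
  then show ?thesis using lenW2 repW by (auto simp: word_representable_def)
qed

end
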